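(* Let $d\geq 2$ and let $u,v\in\mathcal M_d$ with $u\geq_{lex}v$ and $x_1\mid u$ be such that $I=(\mathcal L(u,v))\subset S$ is a completely lexsegment ideal which is not an initial lexsegment ideal. Let $j$ be the exponent of $x_n$ in $v$ and let $a=|\mathcal M_d\setminus\mathcal L^i(u)|$. Then $I$ is a Gotzmann ideal if and only if $$a\geq \binom{n+d-1}{d}-(j+1).$$
   Context: $k$ is a field, $S=k[x_1,\ldots,x_n]$ standard graded. $\mathcal M_d$ is the set of monomials of degree $d$ in $S$, ordered lexicographically with $x_1>\cdots>x_n$; $|\mathcal M_d|=\binom{n+d-1}{d}$. For $u\geq_{lex}v$ in $\mathcal M_d$, $\mathcal L(u,v)=\{w\in\mathcal M_d: u\geq_{lex}w\geq_{lex}v\}$ and $\mathcal L^i(v)=\{w\in\mathcal M_d: w\geq_{lex} v\}$ (initial lexsegment); an initial lexsegment ideal is an ideal generated by some $\mathcal L^i(v)$. For a set $\mathcal L\subset\mathcal M_d$, its shadow is $\mathrm{Shad}(\mathcal L)=\{x_iw: w\in\mathcal L, 1\le i\le n\}\subset\mathcal M_{d+1}$, and iterated shadows are defined recursively. A lexsegment $\mathcal L$ is completely lexsegment if all its iterated shadows are lexsegments (of the corresponding degrees); $(\mathcal L)$ is then called a completely lexsegment ideal. A graded ideal $I$ generated in degree $d$ is Gotzmann if the number of minimal generators of $\mathfrak m I$ (i.e. $\dim_k I_{d+1}$, $\mathfrak m=(x_1,\ldots,x_n)$) equals $|\mathrm{Shad}(\mathcal L)|$, where $\mathcal L$ is the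 initial lexsegment of $\mathcal M_d$ with $|\mathcal L|=\dim_k I_d$; equivalently, $I$ and the ideal generated by $\mathcal L$ have the same Hilbert function. *)

theory Defs
  imports Main
begin

text \<open>Monomials in k[x_1,...,x_n] are represented by exponent vectors
  f :: nat \<Rightarrow> nat, where f (i-1) is the exponent of x_i (indices 0..n-1),
  and f i = 0 for i \<ge> n.\<close>

definition mons :: "nat \<Rightarrow> nat \<Rightarrow> (nat \<Rightarrow> nat) set" where
  "mons n d = {f. (\<forall>i\<ge>n. f i = 0) \<and> (\<Sum>i<n. f i) = d}"

definition lex_gt :: "nat \<Rightarrow> (nat \<Rightarrow> nat) \<Rightarrow> (nat \<Rightarrow> nat) \<Rightarrow> bool" where
  "lex_gt n u v = (\<exists>i<n. u i > v i \<and> (\<forall>k<i. u k = v k))"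

definition lex_ge :: "nat \<Rightarrow> (nat \<Rightarrow> nat) \<Rightarrow> (nat \<Rightarrow> nat) \<Rightarrow> bool" where
  "lex_ge n u v = (u = v \<or> lex_gt n u v)"

definition lexseg :: "nat \<Rightarrow> nat \<Rightarrow> (nat \<Rightarrow> nat) \<Rightarrow> (nat \<Rightarrow> nat) \<Rightarrow> (nat \<Rightarrow> nat) set" where
  "lexseg n d u v = {w \<in> mons n d. lex_ge n u w \<and> lex_ge n w v}"

definition init_lexseg :: "nat \<Rightarrow> nat \<Rightarrow> (nat \<Rightarrow> nat) \<Rightarrow> (nat \<Rightarrow> nat) set" where
  "init_lexseg n d v = {w \<in> mons n d. lex_ge n w v}"

definition shad :: "nat \<Rightarrow> (nat \<Rightarrow> nat) set \<Rightarrow> (nat \<Rightarrow> nat) set" where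
  "shad n L = {(\<lambda>k. w k + (if k = i then 1 else 0)) | w i. w \<in> L \<and> i < n}"

definition is_lexsegment :: "nat \<Rightarrow> nat \<Rightarrow> (nat \<Rightarrow> nat) set \<Rightarrow> bool" where
  "is_lexsegment n d A = (\<exists>u v. u \<in> mons n d \<and> v \<in> mons n d \<and> lex_ge n u v \<and> A = lexseg n d u v)"

definition completely_lexseg :: "nat \<Rightarrow> nat \<Rightarrow> (nat \<Rightarrow> nat) set \<Rightarrow> bool" where
  "completely_lexseg n d L = (\<forall>k. is_lexsegment n (d + k) ((shad n ^^ k) L))"

text \<open>The ideal generated by a set G of degree-d monomials is an initial lexsegment
  ideal iff G is an initial lexsegment (a monomial ideal generated in a single degree
  determines its minimal monomial generating set).\<close>
definition is_init_lexseg_set :: "nat \<Rightarrow> nat \<Rightarrow> (nat \<Rightarrow> nat) set \<Rightarrow> bool" where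
  "is_init_lexseg_set n d G = (\<exists>w \<in> mons n d. G = init_lexseg n d w)"

text \<open>Gotzmann property for the monomial ideal (G) generated in degree d:
  dim_k I_(d+1) = |Shad G| (the monomials of degree d+1 in I form a k-basis of I_(d+1))
  equals |Shad L| for the initial lexsegment L of M_d with |L| = |G|.\<close>
definition gotzmann_monideal :: "nat \<Rightarrow> nat \<Rightarrow> (nat \<Rightarrow> nat) set \<Rightarrow> bool" where
  "gotzmann_monideal n d G =
     (\<exists>w \<in> mons n d. card (init_lexseg n d w) = card G \<and>
        card (shad n G) = card (shad n (init_lexseg n d w)))"

end

theory Submission
  imports Defs
begin



definition mulx :: "(nat \<Rightarrow> nat) \<Rightarrow> nat \<Rightarrow> (nat \<Rightarrow> nat)" where
  "mulx w i = (\<lambda>k. w k + (if k = i then 1 else 0))"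

definition gts :: "nat \<Rightarrow> nat \<Rightarrow> (nat \<Rightarrow> nat) \<Rightarrow> (nat \<Rightarrow> nat) set" where
  "gts n d a = {z \<in> mons n d. lex_gt n z a}"

lemma shad_eq: "shad n L = {mulx w i | w i. w \<in> L \<and> i < n}"
  unfolding shad_def mulx_def by simp

lemma lex_gt_trans: "lex_gt n a b \<Longrightarrow> lex_gt n b c \<Longrightarrow> lex_gt n a c"
  unfolding lex_gt_def
proof (elim exE conjE)
  fix i k assume i: "i < n" "b i < a i" "\<forall>l<i. a l = b l" and k: "k < n" "c k < b k" "\<forall>l<k. b l = c l"
  show "\<exists>i<n. c i < a i \<and> (\<forall>k<i. a k = c k)"
  proof (cases i k rule: linorder_cases)
    case less then show ?thesis using i k by (intro exI[of _ i]) auto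
  next
    case equal then show ?thesis using i k by (intro exI[of _ i]) auto
  next
    case greater then show ?thesis using i k by (intro exI[of _ k]) auto
  qed
qed

lemma lex_gt_irrefl: "\<not> lex_gt n a a"
  unfolding lex_gt_def by auto

lemma lex_gt_asym: "lex_gt n a b \<Longrightarrow> \<not> lex_gt n b a"
  using lex_gt_trans lex_gt_irrefl by blast

lemma mons_zero: "a \<in> mons n d \<Longrightarrow> k \<ge> n \<Longrightarrow> a k = 0"
  unfolding mons_def by auto

lemma mons_sum: "a \<in> mons n d \<Longrightarrow> (\<Sum>i<n. a i) = d"
  unfolding mons_def by auto

lemma lex_gt_total:
  assumes "a \<in> mons n d" "b \<in> mons n e" "a \<noteq> b"
  shows "lex_gt n a b \<or> lex_gt n b a"
proof -
  have ex: "\<exists>k. a k \<noteq> b k" using assms(3) by auto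
  define k where "k = (LEAST k. a k \<noteq> b k)"
  have k1: "a k \<noteq> b k" unfolding k_def by (rule LeastI_ex[OF ex])
  have k2: "\<forall>l<k. a l = b l" unfolding k_def using not_less_Least by blast
  have "k < n"
  proof (rule ccontr)
    assume "\<not> k < n" then have "n \<le> k" by simp
    then show False using k1 mons_zero[OF assms(1)] mons_zero[OF assms(2)] by simp
  qed
  show ?thesis
  proof (cases "a k < b k")
    case True then show ?thesis unfolding lex_gt_def using k2 \<open>k < n\<close> by (intro disjI2 exI[of _ k]) auto
  next
    case False then have "b k < a k" using k1 by simp
    then show ?thesis unfolding lex_gt_def using k2 \<open>k < n\<close> by (intro disjI1 exI[of _ k]) auto
  qed
qed

lemma lex_ge_trans: "lex_ge n a b \<Longrightarrow> lex_ge n b c \<Longrightarrow> lex_ge n a c"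
  unfolding lex_ge_def using lex_gt_trans by blast

lemma lex_ge_antisym: "lex_ge n a b \<Longrightarrow> lex_ge n b a \<Longrightarrow> a = b"
  unfolding lex_ge_def using lex_gt_asym[of n a b] by auto

lemma lex_ge_refl: "lex_ge n a a" unfolding lex_ge_def by simp

lemma not_ge_gt:
  assumes a1: "a \<in> mons n d" "b \<in> mons n e"
  shows "\<not> lex_ge n a b \<longleftrightarrow> lex_gt n b a"
proof
  assume "\<not> lex_ge n a b"
  then have "a \<noteq> b" "\<not> lex_gt n a b" unfolding lex_ge_def by auto
  then show "lex_gt n b a" using lex_gt_total[OF a1] by auto
next
  assume "lex_gt n b a"
  then show "\<not> lex_ge n a b" using lex_gt_asym[of n b a] lex_gt_irrefl[of n a] unfolding lex_ge_def by auto
qed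

lemma lex_gt_mulx: "lex_gt n (mulx a i) (mulx b i) \<longleftrightarrow> lex_gt n a b"
  unfolding lex_gt_def mulx_def by auto

lemma mulx_inj: "mulx a i = mulx b i \<longleftrightarrow> a = b"
proof
  assume eq: "mulx a i = mulx b i"
  show "a = b"
  proof
    fix k
    have "mulx a i k = mulx b i k" by (simp add: eq)
    then show "a k = b k" by (simp add: mulx_def)
  qed
qed simp

lemma lex_ge_mulx: "lex_ge n (mulx a i) (mulx b i) \<longleftrightarrow> lex_ge n a b"
proof -
  have "mulx a i = mulx b i \<longleftrightarrow> a = b" by (rule mulx_inj)
  then show ?thesis unfolding lex_ge_def using lex_gt_mulx by blast
qed

lemma sum_mulx: "i < n \<Longrightarrow> (\<Sum>k<n. mulx y i k) = (\<Sum>k<n. y k) + 1"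
  unfolding mulx_def by (simp add: sum.distrib)

lemma mulx_mons_iff: "i < n \<Longrightarrow> mulx y i \<in> mons n (Suc d) \<longleftrightarrow> y \<in> mons n d"
  unfolding mons_def using sum_mulx[of i n y] by (auto simp: mulx_def)

lemma mulx_ge0: "i < n \<Longrightarrow> lex_ge n (mulx a 0) (mulx a i)"
  unfolding lex_ge_def lex_gt_def mulx_def
  by (cases "i = 0") (auto intro!: exI[of _ 0])

lemma mulx_ge_last: "i < n \<Longrightarrow> lex_ge n (mulx a i) (mulx a (n-1))"
  unfolding lex_ge_def lex_gt_def mulx_def
  by (cases "i = n - 1") (auto intro!: exI[of _ i])

lemma split_sum: "(m::nat) \<le> n \<Longrightarrow> (\<Sum>k<n. f k) = (\<Sum>k<m. f k) + (\<Sum>k\<in>{m..<n}. (f k :: nat))"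
proof -
  assume mn: "m \<le> n"
  have e: "{..<n} = {..<m} \<union> {m..<n}" using mn by auto
  show ?thesis unfolding e
    by (rule sum.union_disjoint) auto
qed

lemma suffix_sum:
  assumes "a \<in> mons n e" "b \<in> mons n e" "m \<le> n" "\<forall>k<m. a k = b k"
  shows "(\<Sum>k\<in>{m..<n}. a k) = (\<Sum>k\<in>{m..<n}. b k)"
proof -
  have "(\<Sum>k<m. a k) = (\<Sum>k<m. b k)" using assms(4) by simp
  then show ?thesis using split_sum[OF assms(3), of a] split_sum[OF assms(3), of b]
    mons_sum[OF assms(1)] mons_sum[OF assms(2)] by linarith
qed

lemma tail_eq:
  assumes "a \<in> mons n e" "b \<in> mons n e" "i < n" "\<forall>k\<le>i. a k = b k" "\<forall>k. i < k \<longrightarrow> a k = 0"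
  shows "a = b"
proof -
  have "\<forall>k<Suc i. b k = a k" using assms(4) by (simp add: less_Suc_eq_le)
  then have "(\<Sum>k\<in>{Suc i..<n}. b k) = (\<Sum>k\<in>{Suc i..<n}. a k)"
    using suffix_sum[OF assms(2) assms(1), of "Suc i"] assms(3) by simp
  also have "\<dots> = 0" using assms(5) by simp
  finally have "\<forall>k\<in>{Suc i..<n}. b k = 0" by simp
  then have bz: "b k = 0" if "i < k" for k
    using that mons_zero[OF assms(2), of k] by (cases "k < n") auto
  show ?thesis
  proof
    fix k show "a k = b k"
    proof (cases "k \<le> i")
      case True then show ?thesis using assms(4) by blast
    next
      case False then have "i < k" by simp
      then show ?thesis using assms(5) bz[of k] by simp
    qed
  qed
qed

lemma two_last:
  assumes "a \<in> mons n e" "b \<in> mons n e" "2 \<le> n" "\<forall>k<n-2. a k = b k"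
  shows "a (n-2) + a (n-1) = b (n-2) + b (n-1)"
proof -
  define m where "m = n - 2"
  have m: "n = Suc (Suc m)" using assms(3) unfolding m_def by simp
  have "(\<Sum>k\<in>{n-2..<n}. a k) = (\<Sum>k\<in>{n-2..<n}. b k)"
    using suffix_sum[OF assms(1,2), of "n-2"] assms(4) by simp
  then show ?thesis using m by simp
qed

lemma lexseg_diff:
  assumes "a \<in> mons n e" "b \<in> mons n e" "lex_ge n a b"
  shows "lexseg n e a b = init_lexseg n e b - gts n e a" "gts n e a \<subseteq> init_lexseg n e b"
proof -
  show "lexseg n e a b = init_lexseg n e b - gts n e a"
  proof (intro equalityI subsetI)
    fix w assume "w \<in> lexseg n e a b"
    then have w: "w \<in> mons n e" "lex_ge n a w" "lex_ge n w b" unfolding lexseg_def by auto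
    have "\<not> lex_gt n w a" using w(2) not_ge_gt[OF assms(1) w(1)] by simp
    then show "w \<in> init_lexseg n e b - gts n e a" using w unfolding init_lexseg_def gts_def by simp
  next
    fix w assume "w \<in> init_lexseg n e b - gts n e a"
    then have w: "w \<in> mons n e" "\<not> lex_gt n w a" "lex_ge n w b" unfolding init_lexseg_def gts_def by auto
    have "lex_ge n a w" using w(2) not_ge_gt[OF assms(1) w(1)] by simp
    then show "w \<in> lexseg n e a b" using w unfolding lexseg_def by simp
  qed
  show "gts n e a \<subseteq> init_lexseg n e b"
  proof
    fix z assume "z \<in> gts n e a"
    then have z: "z \<in> mons n e" "lex_gt n z a" unfolding gts_def by auto
    then have "lex_ge n z a" unfolding lex_ge_def by simp
    then have "lex_ge n z b" using lex_ge_trans assms(3) by blast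
    then show "z \<in> init_lexseg n e b" using z unfolding init_lexseg_def by simp
  qed
qed




lemma lex_gt_0: "lex_gt n z a \<Longrightarrow> a 0 \<le> z 0"
  unfolding lex_gt_def by (metis less_or_eq_imp_le neq0_conv)

lemma gts_mulx0:
  assumes "n \<ge> 1" "u \<in> mons n d"
  shows "gts n (Suc d) (mulx u 0) = (\<lambda>y. mulx y 0) ` gts n d u"
proof (intro equalityI subsetI)
  fix z assume "z \<in> gts n (Suc d) (mulx u 0)"
  then have z: "z \<in> mons n (Suc d)" "lex_gt n z (mulx u 0)" unfolding gts_def by auto
  have "mulx u 0 0 \<le> z 0" using lex_gt_0[OF z(2)] .
  then have z0: "z 0 \<ge> 1" by (simp add: mulx_def)
  define y where "y = (\<lambda>k. z k - (if k = 0 then 1 else 0))"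
  have zy: "mulx y 0 = z"
  proof
    fix k show "mulx y 0 k = z k" using z0 by (simp add: mulx_def y_def)
  qed
  have "y \<in> mons n d" using mulx_mons_iff[of 0 n y d] assms(1) z(1) zy by simp
  moreover have "lex_gt n y u" using z(2) zy lex_gt_mulx[of n y 0 u] by simp
  ultimately show "z \<in> (\<lambda>y. mulx y 0) ` gts n d u" using zy unfolding gts_def by blast
next
  fix z assume "z \<in> (\<lambda>y. mulx y 0) ` gts n d u"
  then obtain y where y: "y \<in> mons n d" "lex_gt n y u" "z = mulx y 0" unfolding gts_def by blast
  have "mulx y 0 \<in> mons n (Suc d)" using mulx_mons_iff[of 0 n y d] assms(1) y(1) by simp
  moreover have "lex_gt n (mulx y 0) (mulx u 0)" using y(2) lex_gt_mulx by simp
  ultimately show "z \<in> gts n (Suc d) (mulx u 0)" using y(3) unfolding gts_def by simp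
qed

lemma card_gts_mulx0:
  assumes "n \<ge> 1" "u \<in> mons n d"
  shows "card (gts n (Suc d) (mulx u 0)) = card (gts n d u)"
proof -
  have "inj_on (\<lambda>y. mulx y 0) (gts n d u)"
    by (rule inj_onI) (simp add: mulx_inj)
  then show ?thesis using gts_mulx0[OF assms] card_image by simp
qed

lemma lexseg_mem: "w \<in> lexseg n d u v \<Longrightarrow> w \<in> mons n d \<and> lex_ge n u w \<and> lex_ge n w v"
  unfolding lexseg_def by simp

lemma shad_lexseg:
  assumes n1: "n \<ge> 1" and u: "u \<in> mons n d" and v: "v \<in> mons n d" and uv: "lex_ge n u v"
    and seg: "is_lexsegment n (Suc d) (shad n (lexseg n d u v))"
  shows "shad n (lexseg n d u v) = lexseg n (Suc d) (mulx u 0) (mulx v (n-1))"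
proof -
  let ?L = "lexseg n d u v"
  obtain a b where ab: "a \<in> mons n (Suc d)" "b \<in> mons n (Suc d)" "lex_ge n a b"
    "shad n ?L = lexseg n (Suc d) a b"
    using seg unfolding is_lexsegment_def by blast
  have bnd: "lex_ge n (mulx u 0) z \<and> lex_ge n z (mulx v (n-1))" if zS: "z \<in> shad n ?L" for z
  proof -
    obtain w i where wi: "z = mulx w i" "w \<in> ?L" "i < n" using zS unfolding shad_eq by blast
    have w: "lex_ge n u w" "lex_ge n w v" using lexseg_mem[OF wi(2)] by auto
    have "lex_ge n (mulx u 0) (mulx w 0)" using w(1) lex_ge_mulx by simp
    moreover have "lex_ge n (mulx w 0) (mulx w i)" using mulx_ge0[OF wi(3)] .
    moreover have "lex_ge n (mulx w i) (mulx w (n-1))" using mulx_ge_last[OF wi(3)] .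
    moreover have "lex_ge n (mulx w (n-1)) (mulx v (n-1))" using w(2) lex_ge_mulx by simp
    ultimately show ?thesis using wi(1) lex_ge_trans by metis
  qed
  have uL: "u \<in> ?L" "v \<in> ?L" using u v uv lex_ge_refl unfolding lexseg_def by auto
  have n0: "0 < n" "n - 1 < n" using n1 by auto
  have u0: "mulx u 0 \<in> shad n ?L" unfolding shad_eq using uL(1) n0 by blast
  have v0: "mulx v (n-1) \<in> shad n ?L" unfolding shad_eq using uL(2) n0 by blast
  have aS: "a \<in> shad n ?L" "b \<in> shad n ?L" using ab lex_ge_refl unfolding lexseg_def by auto
  have "lex_ge n a (mulx u 0)" using u0 ab(4) unfolding lexseg_def by auto
  moreover have "lex_ge n (mulx u 0) a" using bnd[OF aS(1)] by simp
  ultimately have a: "a = mulx u 0" using lex_ge_antisym by blast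
  have "lex_ge n (mulx v (n-1)) b" using v0 ab(4) unfolding lexseg_def by auto
  moreover have "lex_ge n b (mulx v (n-1))" using bnd[OF aS(2)] by simp
  ultimately have b: "b = mulx v (n-1)" using lex_ge_antisym by blast
  show ?thesis using ab(4) a b by simp
qed

lemma init_shad_sub:
  assumes "n \<ge> 1" "w \<in> mons n d"
  shows "shad n (init_lexseg n d w) \<subseteq> init_lexseg n (Suc d) (mulx w (n-1))"
proof
  fix z assume "z \<in> shad n (init_lexseg n d w)"
  then obtain y i where yi: "z = mulx y i" "y \<in> init_lexseg n d w" "i < n" unfolding shad_eq by blast
  have y: "y \<in> mons n d" "lex_ge n y w" using yi(2) unfolding init_lexseg_def by auto
  have "z \<in> mons n (Suc d)" using yi(1,3) y(1) mulx_mons_iff by simp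
  moreover have "lex_ge n z (mulx w (n-1))"
    using yi(1) mulx_ge_last[OF yi(3), of y] y(2) lex_ge_mulx[of n y "n-1" w] lex_ge_trans by metis
  ultimately show "z \<in> init_lexseg n (Suc d) (mulx w (n-1))" unfolding init_lexseg_def by simp
qed




lemma mulx_other: "l \<noteq> j \<Longrightarrow> mulx w j l = w l"
  by (simp add: mulx_def)

lemma mulx_same: "mulx w j j = w j + 1"
  by (simp add: mulx_def)

lemma init_shad_sup:
  assumes n1: "n \<ge> 1" and w: "w \<in> mons n d"
  shows "init_lexseg n (Suc d) (mulx w (n-1)) \<subseteq> shad n (init_lexseg n d w)"
proof
  fix z assume "z \<in> init_lexseg n (Suc d) (mulx w (n-1))"
  then have z: "z \<in> mons n (Suc d)" "lex_ge n z (mulx w (n-1))" unfolding init_lexseg_def by auto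
  define S where "S = {k. k < n \<and> 0 < z k}"
  have finS: "finite S" unfolding S_def by simp
  have neS: "S \<noteq> {}"
  proof
    assume "S = {}"
    then have "\<forall>k<n. z k = 0" unfolding S_def by auto
    then have "(\<Sum>k<n. z k) = 0" by simp
    then show False using mons_sum[OF z(1)] by simp
  qed
  define i where "i = Max S"
  have iS: "i \<in> S" unfolding i_def using Max_in[OF finS neS] .
  then have i: "i < n" "0 < z i" unfolding S_def by auto
  have after: "z k = 0" if "i < k" for k
  proof (cases "k < n")
    case True
    show ?thesis
    proof (rule ccontr)
      assume "z k \<noteq> 0"
      then have "k \<in> S" unfolding S_def using True by simp
      then have "k \<le> i" unfolding i_def using Max_ge[OF finS] by simp
      then show False using that by simp
    qed
  next
    case False then show ?thesis using mons_zero[OF z(1)] by simp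
  qed
  define y where "y = (\<lambda>k. z k - (if k = i then 1 else 0))"
  have zy: "mulx y i = z"
  proof
    fix k show "mulx y i k = z k" using i(2) by (simp add: mulx_def y_def)
  qed
  have ym: "y \<in> mons n d" using mulx_mons_iff[of i n y d] i(1) z(1) zy by simp
  have yk: "y k = z k" if "k \<noteq> i" for k using that by (simp add: y_def)
  have yafter: "y k = 0" if "i < k" for k using after[OF that] that by (simp add: y_def)
  have "lex_ge n y w"
  proof (cases "z = mulx w (n-1)")
    case True
    then have "z (n-1) \<ge> 1" by (simp add: mulx_def)
    then have "n - 1 \<in> S" unfolding S_def using n1 by simp
    then have "n - 1 \<le> i" unfolding i_def using Max_ge[OF finS] by simp
    then have "i = n - 1" using i(1) by simp
    then have "mulx y (n-1) = mulx w (n-1)" using zy True by simp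
    then have "y = w" using mulx_inj by blast
    then show ?thesis using lex_ge_refl by simp
  next
    case False
    then have "lex_gt n z (mulx w (n-1))" using z(2) unfolding lex_ge_def by simp
    then obtain k where k: "k < n" "mulx w (n-1) k < z k" "\<forall>l<k. z l = mulx w (n-1) l"
      unfolding lex_gt_def by blast
    have ki: "k \<le> i"
    proof (rule ccontr)
      assume "\<not> k \<le> i" then have "z k = 0" using after by simp
      then show False using k(2) by simp
    qed
    have pre: "y l = w l" if "l < k" "l < i" "l \<noteq> n - 1" for l
      using k(3) that yk[of l] mulx_other[of l "n-1" w] by simp
    show ?thesis
    proof (cases "k < i")
      case True
      have "k \<noteq> n - 1" using True i(1) by simp
      then have "w k < y k" using k(2) yk[of k] True mulx_other[of k "n-1" w] by simp
      moreover have "\<forall>l<k. y l = w l" using pre True i(1) by simp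
      ultimately have "lex_gt n y w" unfolding lex_gt_def using k(1) by blast
      then show ?thesis unfolding lex_ge_def by simp
    next
      case False
      then have kei: "k = i" using ki by simp
      have pre2: "\<forall>l<i. y l = w l" using pre kei i(1) by simp
      show ?thesis
      proof (cases "i = n - 1")
        case True
        have "w i < y i" using k(2) kei True mulx_same[of w "n-1"] i(2) by (simp add: y_def less_diff_conv)
        then have "lex_gt n y w" unfolding lex_gt_def using pre2 i(1) by blast
        then show ?thesis unfolding lex_ge_def by simp
      next
        case False
        have "w i < z i" using k(2) kei False mulx_other[of i "n-1" w] by simp
        then have wy: "w i \<le> y i" by (simp add: y_def)
        show ?thesis
        proof (cases "w i < y i")
          case True
          then have "lex_gt n y w" unfolding lex_gt_def using pre2 i(1) by blast
          then show ?thesis unfolding lex_ge_def by simp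
        next
          case False
          then have "y i = w i" using wy by simp
          then have "\<forall>l\<le>i. y l = w l" using pre2 by (metis le_neq_implies_less)
          then have "y = w" using tail_eq[OF ym w i(1)] yafter by blast
          then show ?thesis using lex_ge_refl by simp
        qed
      qed
    qed
  qed
  then have "y \<in> init_lexseg n d w" using ym unfolding init_lexseg_def by simp
  then show "z \<in> shad n (init_lexseg n d w)" unfolding shad_eq using zy i(1) by blast
qed




definition shf :: "nat \<Rightarrow> (nat \<Rightarrow> nat) \<Rightarrow> nat \<Rightarrow> (nat \<Rightarrow> nat)" where
  "shf n v t = v(n-2 := v (n-2) + t, n-1 := v (n-1) - t)"

lemma sum_last2: "2 \<le> (n::nat) \<Longrightarrow> (\<Sum>k<n. f k) = (\<Sum>k<n-2. f k) + f (n-2) + (f (n-1) :: nat)"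
proof -
  assume "2 \<le> n"
  define m where "m = n - 2"
  have m: "n = Suc (Suc m)" using \<open>2 \<le> n\<close> unfolding m_def by simp
  show ?thesis using m by simp
qed

lemma shf_vals:
  assumes "2 \<le> n"
  shows "shf n v t (n-2) = v (n-2) + t" "shf n v t (n-1) = v (n-1) - t"
        "k \<noteq> n-2 \<Longrightarrow> k \<noteq> n-1 \<Longrightarrow> shf n v t k = v k"
  using assms unfolding shf_def by auto

lemma shf_0: "shf n v 0 = v" unfolding shf_def by simp

lemma shf_mons:
  assumes n2: "2 \<le> n" and v: "v \<in> mons n e" and t: "t \<le> v (n-1)"
  shows "shf n v t \<in> mons n e"
proof -
  have z: "shf n v t k = 0" if "n \<le> k" for k
    using that n2 shf_vals(3)[OF n2, of k v t] mons_zero[OF v that] by simp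
  have "(\<Sum>k<n-2. shf n v t k) = (\<Sum>k<n-2. v k)"
    by (rule sum.cong) (use shf_vals(3)[OF n2] in auto)
  then have "(\<Sum>k<n. shf n v t k) = (\<Sum>k<n. v k)"
    using sum_last2[OF n2, of "shf n v t"] sum_last2[OF n2, of v] shf_vals(1,2)[OF n2, of v t] t by simp
  then show ?thesis using mons_sum[OF v] z unfolding mons_def by simp
qed

lemma shf_gt:
  assumes n2: "2 \<le> n" and st: "s < t"
  shows "lex_gt n (shf n v t) (shf n v s)"
  unfolding lex_gt_def
proof (intro exI[of _ "n-2"] conjI allI impI)
  show "n - 2 < n" using n2 by simp
  show "shf n v s (n - 2) < shf n v t (n - 2)" using shf_vals(1)[OF n2] st by simp
  fix l assume "l < n - 2"
  then show "shf n v t l = shf n v s l" using shf_vals(3)[OF n2] by simp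
qed

lemma shf_ge: "2 \<le> n \<Longrightarrow> lex_ge n (shf n v t) v"
  using shf_gt[of n 0 t v] shf_0[of n v] unfolding lex_ge_def by (cases "t = 0") auto

lemma sandwich:
  assumes ay: "lex_ge n a y" and yb: "lex_ge n y b" and ab: "\<forall>k<m. a k = b k"
  shows "\<forall>k<m. y k = b k"
proof (rule ccontr)
  assume "\<not> (\<forall>k<m. y k = b k)"
  then have ex: "\<exists>k. k < m \<and> y k \<noteq> b k" by blast
  define k0 where "k0 = (LEAST k. k < m \<and> y k \<noteq> b k)"
  have k0: "k0 < m" "y k0 \<noteq> b k0" using LeastI_ex[OF ex] unfolding k0_def by auto
  have before: "y l = b l" if "l < k0" for l
  proof -
    have "\<not> (l < m \<and> y l \<noteq> b l)" using not_less_Least[OF that[unfolded k0_def]] by simp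
    then show ?thesis using that k0(1) by simp
  qed
  have "y \<noteq> b" using k0 by auto
  then obtain i where i: "i < n" "b i < y i" "\<forall>l<i. y l = b l" using yb unfolding lex_ge_def lex_gt_def by blast
  have "i = k0"
  proof (rule ccontr)
    assume "i \<noteq> k0"
    then consider "i < k0" | "k0 < i" by linarith
    then show False
    proof cases
      case 1 then show False using before[OF 1] i(2) by simp
    next
      case 2 then show False using i(3) k0(2) by simp
    qed
  qed
  then have g1: "b k0 < y k0" using i(2) by simp
  have abk: "a k0 = b k0" using ab k0(1) by simp
  then have "a \<noteq> y" using k0(2) by auto
  then obtain j where j: "j < n" "y j < a j" "\<forall>l<j. a l = y l" using ay unfolding lex_ge_def lex_gt_def by blast
  consider "j < k0" | "j = k0" | "k0 < j" by linarith
  then show False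
  proof cases
    case 1 then show False using before[OF 1] ab j(2) k0(1) by simp
  next
    case 2 then show False using j(2) abk g1 by simp
  next
    case 3 then show False using j(3) abk k0(2) by simp
  qed
qed




lemma interval:
  assumes n2: "2 \<le> n" and v: "v \<in> mons n e" and p: "p \<le> v (n-1)"
  shows "{y \<in> mons n e. lex_ge n y v \<and> lex_gt n (shf n v p) y} = shf n v ` {..<p}"
proof (intro equalityI subsetI)
  fix y assume "y \<in> shf n v ` {..<p}"
  then obtain t where t: "t < p" "y = shf n v t" by blast
  have "y \<in> mons n e" using shf_mons[OF n2 v] t p by simp
  moreover have "lex_ge n y v" using shf_ge[OF n2] t by simp
  moreover have "lex_gt n (shf n v p) y" using shf_gt[OF n2 t(1)] t by simp
  ultimately show "y \<in> {y \<in> mons n e. lex_ge n y v \<and> lex_gt n (shf n v p) y}" by simp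
next
  fix y assume "y \<in> {y \<in> mons n e. lex_ge n y v \<and> lex_gt n (shf n v p) y}"
  then have y: "y \<in> mons n e" "lex_ge n y v" "lex_gt n (shf n v p) y" by auto
  define s where "s = shf n v p"
  have sm: "s \<in> mons n e" unfolding s_def using shf_mons[OF n2 v p] .
  have sv: "\<forall>k<n-2. s k = v k" unfolding s_def using shf_vals(3)[OF n2] by simp
  have "lex_ge n s y" using y(3) unfolding s_def lex_ge_def by simp
  then have agree: "\<forall>k<n-2. y k = v k" using sandwich[OF _ y(2) sv] by blast
  have lo: "v (n-2) \<le> y (n-2)"
  proof (cases "y = v")
    case True then show ?thesis by simp
  next
    case False
    then obtain i where i: "i < n" "v i < y i" "\<forall>l<i. y l = v l"
      using y(2) unfolding lex_ge_def lex_gt_def by blast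
    have "\<not> i < n - 2" using agree i(2) by auto
    then consider "i = n - 2" | "i = n - 1" using i(1) by linarith
    then show ?thesis
    proof cases
      case 1 then show ?thesis using i(2) by simp
    next
      case 2 then have "n - 2 < i" using n2 by simp
      then show ?thesis using i(3) by simp
    qed
  qed
  have ys_agree: "\<forall>k<n-2. y k = s k" using agree sv by simp
  have tl_s: "y (n-2) + y (n-1) = s (n-2) + s (n-1)" using two_last[OF y(1) sm n2 ys_agree] .
  have hi: "y (n-2) < v (n-2) + p"
  proof -
    obtain i where i: "i < n" "y i < s i" "\<forall>l<i. s l = y l"
      using y(3) unfolding s_def lex_gt_def by blast
    have "\<not> i < n - 2" using ys_agree i(2) by auto
    then consider "i = n - 2" | "i = n - 1" using i(1) by linarith
    then show ?thesis
    proof cases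
      case 1 then show ?thesis using i(2) shf_vals(1)[OF n2] unfolding s_def by simp
    next
      case 2 then have "n - 2 < i" using n2 by simp
      then have "y (n-2) = s (n-2)" using i(3) by simp
      moreover have "y (n-1) < s (n-1)" using i(2) 2 by simp
      ultimately show ?thesis using tl_s by simp
    qed
  qed
  define t where "t = y (n-2) - v (n-2)"
  have tp: "t < p" using lo hi unfolding t_def by simp
  have tl_v: "y (n-2) + y (n-1) = v (n-2) + v (n-1)" using two_last[OF y(1) v n2 agree] .
  have "y = shf n v t"
  proof
    fix k
    consider "k < n - 2" | "k = n - 2" | "k = n - 1" | "n \<le> k" using n2 by linarith
    then show "y k = shf n v t k"
    proof cases
      case 1 then show ?thesis using agree shf_vals(3)[OF n2, of k v t] by simp
    next
      case 2 then show ?thesis using shf_vals(1)[OF n2, of v t] lo unfolding t_def by simp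
    next
      case 3 then show ?thesis using shf_vals(2)[OF n2, of v t] lo tl_v unfolding t_def by (simp, arith)
    next
      case 4
      then have "k \<noteq> n - 2" "k \<noteq> n - 1" using n2 by auto
      then show ?thesis using shf_vals(3)[OF n2, of k v t] mons_zero[OF y(1) 4] mons_zero[OF v 4] by simp
    qed
  qed
  then show "y \<in> shf n v ` {..<p}" using tp by blast
qed

lemma card_init_shf:
  assumes n2: "2 \<le> n" and v: "v \<in> mons n e" and p: "p \<le> v (n-1)" and fin: "finite (mons n e)"
  shows "card (init_lexseg n e v) = card (init_lexseg n e (shf n v p)) + p"
proof -
  let ?s = "shf n v p"
  have sm: "?s \<in> mons n e" using shf_mons[OF n2 v p] .
  have sub: "init_lexseg n e ?s \<subseteq> init_lexseg n e v"
    unfolding init_lexseg_def using shf_ge[OF n2, of v p] lex_ge_trans by blast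
  have diff: "init_lexseg n e v - init_lexseg n e ?s = shf n v ` {..<p}"
  proof -
    have "init_lexseg n e v - init_lexseg n e ?s = {y \<in> mons n e. lex_ge n y v \<and> lex_gt n ?s y}"
    proof (intro equalityI subsetI)
      fix y assume "y \<in> init_lexseg n e v - init_lexseg n e ?s"
      then have "y \<in> mons n e" "lex_ge n y v" "\<not> lex_ge n y ?s" unfolding init_lexseg_def by auto
      then show "y \<in> {y \<in> mons n e. lex_ge n y v \<and> lex_gt n ?s y}" using not_ge_gt[of y n e ?s e] sm by simp
    next
      fix y assume "y \<in> {y \<in> mons n e. lex_ge n y v \<and> lex_gt n ?s y}"
      then have "y \<in> mons n e" "lex_ge n y v" "lex_gt n ?s y" by auto
      then show "y \<in> init_lexseg n e v - init_lexseg n e ?s" using not_ge_gt[of y n e ?s e] sm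
        unfolding init_lexseg_def by simp
    qed
    then show ?thesis using interval[OF n2 v p] by simp
  qed
  have inj: "inj_on (shf n v) {..<p}"
  proof (rule inj_onI)
    fix a b assume "shf n v a = shf n v b"
    then have "shf n v a (n-2) = shf n v b (n-2)" by simp
    then show "a = b" using shf_vals(1)[OF n2] by simp
  qed
  have "finite (init_lexseg n e v)" using fin unfolding init_lexseg_def by simp
  then have "card (init_lexseg n e v - init_lexseg n e ?s) = card (init_lexseg n e v) - card (init_lexseg n e ?s)"
    using card_Diff_subset[OF _ sub] finite_subset[OF sub] by simp
  moreover have "card (shf n v ` {..<p}) = p" using card_image[OF inj] by simp
  moreover have "card (init_lexseg n e ?s) \<le> card (init_lexseg n e v)"
    using card_mono[OF _ sub] \<open>finite (init_lexseg n e v)\<close> by simp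
  ultimately show ?thesis using diff by simp
qed

lemma last_step:
  assumes n2: "2 \<le> n" and w: "w \<in> mons n e" and s: "s \<in> mons n e" and s0: "s (n-1) = 0"
    and gt: "lex_gt n w s"
  shows "lex_gt n (mulx w (n-1)) (mulx s (n-2))"
proof -
  obtain k where k: "k < n" "s k < w k" "\<forall>l<k. w l = s l" using gt unfolding lex_gt_def by blast
  consider "k < n - 2" | "k = n - 2" | "k = n - 1" using k(1) n2 by linarith
  then show ?thesis
  proof cases
    case 1
    have "mulx s (n-2) k < mulx w (n-1) k" using k(2) 1 mulx_other by simp
    moreover have "\<forall>l<k. mulx w (n-1) l = mulx s (n-2) l" using k(3) 1 mulx_other by simp
    ultimately show ?thesis unfolding lex_gt_def using k(1) by blast
  next
    case 2
    have "\<forall>l<n-2. w l = s l" using k(3) 2 by simp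
    then have "w (n-2) + w (n-1) = s (n-2) + s (n-1)" using two_last[OF w s n2] by simp
    then show ?thesis using k(2) 2 s0 by simp
  next
    case 3
    then show ?thesis using k(2) s0 two_last[OF w s n2] k(3) n2 by simp
  qed
qed




lemma card_mons:
  assumes "n \<ge> 1"
  shows "card (mons n d) = (d + n - 1) choose d" "finite (mons n d)"
proof -
  let ?L = "{l::nat list. size l = n \<and> sum_list l = d}"
  have sl: "sum_list (map f [0..<n]) = (\<Sum>k<n. f k)" for f :: "nat \<Rightarrow> nat"
    by (simp add: sum_set_upt_conv_sum_list_nat[symmetric] lessThan_atLeast0)
  have bij: "bij_betw (\<lambda>f. map f [0..<n]) (mons n d) ?L"
  proof (rule bij_betw_byWitness[where f' = "\<lambda>l i. if i < n then l ! i else 0"])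
    show "\<forall>a\<in>mons n d. (\<lambda>i. if i < n then map a [0..<n] ! i else 0) = a"
      using mons_zero by fastforce
    show "\<forall>a'\<in>?L. map (\<lambda>i. if i < n then a' ! i else 0) [0..<n] = a'"
      by (auto intro: nth_equalityI)
    show "(\<lambda>f. map f [0..<n]) ` mons n d \<subseteq> ?L"
      using sl mons_sum by auto
    show "(\<lambda>l i. if i < n then l ! i else 0) ` ?L \<subseteq> mons n d"
    proof
      fix g assume "g \<in> (\<lambda>l i. if i < n then l ! i else 0) ` ?L"
      then obtain l where l: "l \<in> ?L" "g = (\<lambda>i. if i < n then l ! i else 0)" by blast
      have "map g [0..<n] = l" using l by (auto intro: nth_equalityI)
      then have "(\<Sum>k<n. g k) = d" using sl[of g] l by simp
      then show "g \<in> mons n d" unfolding mons_def using l by auto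
    qed
  qed
  have c: "card ?L = (d + n - 1) choose d" by (rule card_length_sum_list)
  have "card ?L > 0" unfolding c using assms by simp
  then have "finite ?L" using card_ge_0_finite by blast
  then show "finite (mons n d)" using bij_betw_finite[OF bij] by simp
  show "card (mons n d) = (d + n - 1) choose d" using bij_betw_same_card[OF bij] c by simp
qed


lemma init_shad_eq:
  assumes "n \<ge> 1" "w \<in> mons n d"
  shows "shad n (init_lexseg n d w) = init_lexseg n (Suc d) (mulx w (n-1))"
  using init_shad_sub[OF assms] init_shad_sup[OF assms] by blast

lemma n1_gts_empty:
  assumes "u \<in> mons 1 d"
  shows "gts 1 d u = {}"
proof -
  have "z = u" if "z \<in> mons 1 d" for z
  proof
    fix k show "z k = u k"
    proof (cases "k = 0")
      case True then show ?thesis using mons_sum[OF that] mons_sum[OF assms] by simp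
    next
      case False then show ?thesis using mons_zero[OF that] mons_zero[OF assms] by simp
    qed
  qed
  then show ?thesis unfolding gts_def using lex_gt_irrefl by blast
qed

lemma init_mono:
  assumes "lex_ge n a b"
  shows "init_lexseg n e a \<subseteq> init_lexseg n e b"
  unfolding init_lexseg_def using assms lex_ge_trans by blast

lemma init_finite: "finite (mons n e) \<Longrightarrow> finite (init_lexseg n e a)"
  unfolding init_lexseg_def by simp

lemma card_init_u:
  assumes "u \<in> mons n d" "finite (mons n d)"
  shows "card (init_lexseg n d u) = card (gts n d u) + 1"
proof -
  have e: "init_lexseg n d u = insert u (gts n d u)"
    unfolding init_lexseg_def gts_def lex_ge_def using assms(1) by auto
  have "u \<notin> gts n d u" unfolding gts_def using lex_gt_irrefl by blast
  moreover have "finite (gts n d u)" using assms(2) unfolding gts_def by simp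
  ultimately show ?thesis unfolding e by simp
qed




theorem mainTheorem4:
  fixes n d :: nat and u v :: "nat \<Rightarrow> nat"
  assumes "d \<ge> 2"
    and "u \<in> mons n d" and "v \<in> mons n d" and "lex_ge n u v"
    and "u 0 \<ge> 1"
    and "completely_lexseg n d (lexseg n d u v)"
    and "\<not> is_init_lexseg_set n d (lexseg n d u v)"
  shows "gotzmann_monideal n d (lexseg n d u v) \<longleftrightarrow>
         int (card (mons n d - init_lexseg n d u)) \<ge> int (n + d - 1 choose d) - (int (v (n - 1)) + 1)"
proof -
  note u = assms(2) and v = assms(3) and uv = assms(4)
  let ?L = "lexseg n d u v"
  define p where "p = card (gts n d u)"
  define j where "j = v (n - 1)"
  have n1: "n \<ge> 1"
  proof (rule ccontr)
    assume "\<not> n \<ge> 1" then have "n = 0" by simp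
    then show False using mons_sum[OF u] assms(1) by simp
  qed
  have finM: "finite (mons n d)" using card_mons(2)[OF n1] .
  have finM': "finite (mons n (Suc d))" using card_mons(2)[OF n1] .
  have cardM: "card (mons n d) = (n + d - 1) choose d" using card_mons(1)[OF n1, of d] by (simp add: add.commute)
  define v' where "v' = mulx v (n-1)"
  have n0: "0 < n" "n - 1 < n" using n1 by auto
  have v'm: "v' \<in> mons n (Suc d)" unfolding v'_def using mulx_mons_iff[OF n0(2)] v by simp
  have v'j: "v' (n-1) = j + 1" unfolding v'_def j_def by (simp add: mulx_same)
  have Ldiff: "?L = init_lexseg n d v - gts n d u" "gts n d u \<subseteq> init_lexseg n d v"
    using lexseg_diff[OF u v uv] by auto
  have pv: "p \<le> card (init_lexseg n d v)" unfolding p_def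
    using card_mono[OF init_finite[OF finM] Ldiff(2)] .
  have cardL: "card ?L = card (init_lexseg n d v) - p"
    unfolding Ldiff(1) p_def using card_Diff_subset[OF _ Ldiff(2)] finite_subset[OF Ldiff(2) init_finite[OF finM]] by simp
  have "is_lexsegment n (d + 1) ((shad n ^^ 1) ?L)" using assms(6) unfolding completely_lexseg_def by blast
  then have seg: "is_lexsegment n (Suc d) (shad n ?L)" by simp
  have SL: "shad n ?L = lexseg n (Suc d) (mulx u 0) v'"
    unfolding v'_def using shad_lexseg[OF n1 u v uv seg] .
  have u0m: "mulx u 0 \<in> mons n (Suc d)" using mulx_mons_iff[OF n0(1)] u by simp
  have u0v': "lex_ge n (mulx u 0) v'"
  proof -
    have "lex_ge n (mulx u 0) (mulx v 0)" using uv lex_ge_mulx by simp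
    moreover have "lex_ge n (mulx v 0) (mulx v (n-1))" using mulx_ge0[OF n0(2)] .
    ultimately show ?thesis unfolding v'_def using lex_ge_trans by blast
  qed
  have SLd: "lexseg n (Suc d) (mulx u 0) v' = init_lexseg n (Suc d) v' - gts n (Suc d) (mulx u 0)"
    "gts n (Suc d) (mulx u 0) \<subseteq> init_lexseg n (Suc d) v'"
    using lexseg_diff[OF u0m v'm u0v'] by auto
  have cg: "card (gts n (Suc d) (mulx u 0)) = p" unfolding p_def using card_gts_mulx0[OF n1 u] .
  have pv': "p \<le> card (init_lexseg n (Suc d) v')"
    using card_mono[OF init_finite[OF finM'] SLd(2)] cg by simp
  have cardSL: "card (shad n ?L) = card (init_lexseg n (Suc d) v') - p"
    unfolding SL SLd(1) using card_Diff_subset[OF _ SLd(2)] finite_subset[OF SLd(2) init_finite[OF finM']] cg by simp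
  have initu_sub: "init_lexseg n d u \<subseteq> mons n d" unfolding init_lexseg_def by auto
  have ciu: "card (init_lexseg n d u) = p + 1" unfolding p_def using card_init_u[OF u finM] .
  have le: "p + 1 \<le> card (mons n d)" using card_mono[OF finM initu_sub] ciu by simp
  have cdiff: "card (mons n d - init_lexseg n d u) = card (mons n d) - (p + 1)"
    using card_Diff_subset[OF init_finite[OF finM] initu_sub] ciu by simp
  have rhs: "(int (card (mons n d - init_lexseg n d u)) \<ge> int (n + d - 1 choose d) - (int (v (n - 1)) + 1))
             \<longleftrightarrow> p \<le> j"
    unfolding cdiff cardM[symmetric] j_def using le by linarith
  have n2: "2 \<le> n" if "0 < p"
  proof (rule ccontr)
    assume "\<not> 2 \<le> n" then have "n = 1" using n1 by simp
    then have "p = 0" unfolding p_def using n1_gts_empty u by simp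
    then show False using that by simp
  qed
  have main: "gotzmann_monideal n d ?L \<longleftrightarrow> p \<le> j"
  proof
    assume "p \<le> j"
    show "gotzmann_monideal n d ?L"
    proof (cases "p = 0")
      case True
      have "card (init_lexseg n d v) = card ?L" using cardL True by simp
      moreover have "card (shad n ?L) = card (shad n (init_lexseg n d v))"
        using cardSL True init_shad_eq[OF n1 v] unfolding v'_def by simp
      ultimately show ?thesis unfolding gotzmann_monideal_def using v by blast
    next
      case False
      then have n2: "2 \<le> n" using n2 by simp
      define w where "w = shf n v p"
      have pj: "p \<le> v (n-1)" using \<open>p \<le> j\<close> unfolding j_def .
      have wm: "w \<in> mons n d" unfolding w_def using shf_mons[OF n2 v pj] .
      have "card (init_lexseg n d v) = card (init_lexseg n d w) + p"
        unfolding w_def using card_init_shf[OF n2 v pj finM] .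
      then have c1: "card (init_lexseg n d w) = card ?L" using cardL by simp
      have ww: "mulx w (n-1) = shf n v' p"
      proof
        fix k
        consider "k = n - 2" | "k = n - 1" | "k \<noteq> n - 2" "k \<noteq> n - 1" by blast
        then show "mulx w (n-1) k = shf n v' p k"
        proof cases
          case 1
          then have "k \<noteq> n - 1" using n2 by simp
          then show ?thesis using 1 unfolding w_def v'_def
            by (simp add: shf_vals[OF n2] mulx_other)
        next
          case 2
          have a: "shf n v p (n-1) = v (n-1) - p" using shf_vals(2)[OF n2] .
          have b: "shf n v' p (n-1) = v' (n-1) - p" using shf_vals(2)[OF n2] .
          have c: "v' (n-1) = v (n-1) + 1" unfolding v'_def by (simp add: mulx_same)
          have "mulx w (n-1) (n-1) = shf n v p (n-1) + 1" unfolding w_def by (rule mulx_same)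
          then show ?thesis using 2 a b c pj by (simp add: Suc_diff_le)
        next
          case 3
          then show ?thesis unfolding w_def v'_def
            by (simp add: shf_vals[OF n2] mulx_other)
        qed
      qed
      have pj': "p \<le> v' (n-1)" using v'j \<open>p \<le> j\<close> by simp
      have "card (init_lexseg n (Suc d) v') = card (init_lexseg n (Suc d) (shf n v' p)) + p"
        using card_init_shf[OF n2 v'm pj' finM'] .
      then have "card (shad n (init_lexseg n d w)) = card (shad n ?L)"
        using init_shad_eq[OF n1 wm] ww cardSL by simp
      then show ?thesis unfolding gotzmann_monideal_def using wm c1 by metis
    qed
  next
    assume "gotzmann_monideal n d ?L"
    then obtain w where wm: "w \<in> mons n d" and cw: "card (init_lexseg n d w) = card ?L"
      and sw: "card (shad n ?L) = card (shad n (init_lexseg n d w))"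
      unfolding gotzmann_monideal_def by blast
    show "p \<le> j"
    proof (rule ccontr)
      assume "\<not> p \<le> j"
      then have jp: "j < p" by simp
      then have n2: "2 \<le> n" using n2 by simp
      define s where "s = shf n v j"
      have jj: "j \<le> v (n-1)" unfolding j_def by simp
      have sm: "s \<in> mons n d" unfolding s_def using shf_mons[OF n2 v jj] .
      have s0: "s (n-1) = 0" unfolding s_def j_def using shf_vals(2)[OF n2] by simp
      have cs: "card (init_lexseg n d v) = card (init_lexseg n d s) + j"
        unfolding s_def using card_init_shf[OF n2 v jj finM] .
      have ws: "lex_gt n w s"
      proof (rule ccontr)
        assume "\<not> lex_gt n w s"
        then have "lex_ge n s w" using not_ge_gt[OF sm wm] by simp
        then have "init_lexseg n d s \<subseteq> init_lexseg n d w" by (rule init_mono)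
        then have "card (init_lexseg n d s) \<le> card (init_lexseg n d w)"
          using card_mono init_finite[OF finM] by blast
        then show False using cw cardL cs jp pv by simp
      qed
      have sv: "lex_ge n s v" unfolding s_def using shf_ge[OF n2] .
      have wv: "lex_ge n w v" using ws sv lex_ge_trans unfolding lex_ge_def by blast
      define w' where "w' = mulx w (n-1)"
      define z where "z = mulx s (n-2)"
      define A where "A = init_lexseg n (Suc d) w'"
      define B where "B = (\<lambda>y. mulx y (n-1)) ` (init_lexseg n d v - init_lexseg n d w)"
      have n22: "n - 2 < n" "n - 2 \<noteq> n - 1" using n2 by auto
      have w'v': "lex_ge n w' v'" unfolding w'_def v'_def using wv lex_ge_mulx by simp
      have Asub: "A \<subseteq> init_lexseg n (Suc d) v'" unfolding A_def using init_mono[OF w'v'] .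
      have Bsub: "B \<subseteq> init_lexseg n (Suc d) v'"
      proof
        fix x assume "x \<in> B"
        then obtain y where y: "y \<in> mons n d" "lex_ge n y v" "x = mulx y (n-1)"
          unfolding B_def init_lexseg_def by blast
        have "x \<in> mons n (Suc d)" using y mulx_mons_iff[OF n0(2)] by simp
        moreover have "lex_ge n x v'" using y lex_ge_mulx unfolding v'_def by simp
        ultimately show "x \<in> init_lexseg n (Suc d) v'" unfolding init_lexseg_def by simp
      qed
      have zm: "z \<in> mons n (Suc d)" unfolding z_def using mulx_mons_iff[OF n22(1)] sm by simp
      have zv': "lex_gt n z v'"
        unfolding lex_gt_def
      proof (intro exI[of _ "n-2"] conjI allI impI)
        show "n - 2 < n" using n22 by simp
        have "z (n-2) = v (n-2) + j + 1" unfolding z_def s_def using shf_vals(1)[OF n2] by (simp add: mulx_same)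
        moreover have "v' (n-2) = v (n-2)" unfolding v'_def using n22 by (simp add: mulx_other)
        ultimately show "v' (n - 2) < z (n - 2)" by simp
        fix l assume "l < n - 2"
        then have "l \<noteq> n - 2" "l \<noteq> n - 1" by auto
        then show "z l = v' l" unfolding z_def v'_def s_def using shf_vals(3)[OF n2] by (simp add: mulx_other)
      qed
      have zin: "z \<in> init_lexseg n (Suc d) v'" using zm zv' unfolding init_lexseg_def lex_ge_def by simp
      have AB: "A \<inter> B = {}"
      proof (rule ccontr)
        assume "A \<inter> B \<noteq> {}"
        then obtain y where y: "y \<in> init_lexseg n d v" "y \<notin> init_lexseg n d w" "mulx y (n-1) \<in> A"
          unfolding B_def by blast
        have "lex_ge n (mulx y (n-1)) w'" using y(3) unfolding A_def init_lexseg_def by simp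
        then have "lex_ge n y w" unfolding w'_def using lex_ge_mulx by simp
        then show False using y(1,2) unfolding init_lexseg_def by simp
      qed
      have w'm: "w' \<in> mons n (Suc d)" unfolding w'_def using mulx_mons_iff[OF n0(2)] wm by simp
      have zA: "z \<notin> A"
      proof
        assume "z \<in> A"
        then have "lex_ge n z w'" unfolding A_def init_lexseg_def by simp
        moreover have "lex_gt n w' z" unfolding w'_def z_def using last_step[OF n2 wm sm s0 ws] .
        ultimately show False using not_ge_gt[OF zm w'm] by simp
      qed
      have zB: "z \<notin> B"
      proof
        assume "z \<in> B"
        then obtain y where "z = mulx y (n-1)" unfolding B_def by blast
        then have "z (n-1) \<ge> 1" by (simp add: mulx_same)
        moreover have "z (n-1) = 0" unfolding z_def using s0 n22 by (simp add: mulx_other)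
        ultimately show False by simp
      qed
      have finA: "finite A" unfolding A_def using init_finite[OF finM'] .
      have finB: "finite B" unfolding B_def using init_finite[OF finM] by simp
      have injB: "inj_on (\<lambda>y. mulx y (n-1)) (init_lexseg n d v - init_lexseg n d w)"
        by (rule inj_onI) (simp add: mulx_inj)
      have subw: "init_lexseg n d w \<subseteq> init_lexseg n d v" using init_mono[OF wv] .
      have cB: "card B = p"
        unfolding B_def card_image[OF injB]
        using card_Diff_subset[OF init_finite[OF finM] subw] cw cardL pv by simp
      have cA: "card (shad n ?L) \<le> card A"
        unfolding sw A_def w'_def using card_mono[OF init_finite[OF finM'] init_shad_sub[OF n1 wm]] .
      have "A \<union> B \<union> {z} \<subseteq> init_lexseg n (Suc d) v'" using Asub Bsub zin by blast
      then have "card (A \<union> B \<union> {z}) \<le> card (init_lexseg n (Suc d) v')"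
        using card_mono init_finite[OF finM'] by blast
      moreover have "card (A \<union> B \<union> {z}) = card A + card B + 1"
      proof -
        have "card (A \<union> B) = card A + card B" using card_Un_disjoint[OF finA finB AB] .
        moreover have "z \<notin> A \<union> B" using zA zB by simp
        ultimately show ?thesis using finA finB by simp
      qed
      ultimately show False using cA cB cardSL pv' by simp
    qed
  qed
  show ?thesis using main rhs by simp
qed


end
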